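(* $9\,(\partial')^2=2\,(1-\partial^2)\,(4\partial^3-3\partial+1-2\lambda^2)/\partial^2$.
   Context: Let $0<\kappa<1$ and $\lambda=\sqrt{1-\kappa^2}$. Let $F(\tfrac16,\tfrac56;\tfrac12;\cdot)$ denote the Gauss hypergeometric function. Define $u$ as a function of $\phi$ near $0$ by $u=\int_0^{\sin\phi}F(\tfrac16,\tfrac56;\tfrac12;\kappa^2t^2)\,\frac{dt}{\sqrt{1-t^2}}$; near the origin (fixing $0$) this inverts to a holomorphic function $u\mapsto\phi(u)$ with $\phi(0)=0$. Let $\psi$ be the holomorphic function near $0$ with $\psi(0)=0$ and $\sin\psi=\kappa\sin\phi$. Set $\partial=\cos\tfrac23\psi$ (a function of $u$ on a small disc about $0$); primes denote $d/du$. *)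

theory Defs
  imports "HOL-Complex_Analysis.Complex_Analysis"
begin

definition hyp2f1 :: "complex \<Rightarrow> complex \<Rightarrow> complex \<Rightarrow> complex \<Rightarrow> complex" where
  "hyp2f1 a b c z =
     (\<Sum>n. pochhammer a n * pochhammer b n / (pochhammer c n * fact n) * z ^ n)"

definition U_of_phi :: "real \<Rightarrow> complex \<Rightarrow> complex" where
  "U_of_phi \<kappa> \<phi> =
     contour_integral (linepath 0 (sin \<phi>))
       (\<lambda>t. hyp2f1 (1/6) (5/6) (1/2) ((complex_of_real \<kappa>)\<^sup>2 * t\<^sup>2) / csqrt (1 - t\<^sup>2))"

end

theory Submission
  imports Defs
begin


definition HA :: "complex fps" where
  "HA = Abs_fps (\<lambda>n. pochhammer (1/6) n * pochhammer (5/6) n / (pochhammer (1/2) n * fact n))"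

lemma HA_eval: "eval_fps HA z = hyp2f1 (1/6) (5/6) (1/2) z"
  by (simp add: HA_def eval_fps_def hyp2f1_def)

definition cr :: "nat \<Rightarrow> real" where
  "cr n = pochhammer (1/6) n * pochhammer (5/6) n / (pochhammer (1/2) n * fact n)"

lemma HA_nth_cr: "HA $ n = of_real (cr n)"
proof -
  have e: "pochhammer (1/6::complex) n = of_real (pochhammer (1/6) n)"
    "pochhammer (5/6::complex) n = of_real (pochhammer (5/6) n)"
    "pochhammer (1/2::complex) n = of_real (pochhammer (1/2) n)"
  proof -
    have a: "of_real (1/6) = (1/6::complex)" "of_real (5/6) = (5/6::complex)" "of_real (1/2) = (1/2::complex)"
      by simp_all
    show "pochhammer (1/6::complex) n = of_real (pochhammer (1/6) n)"
      "pochhammer (5/6::complex) n = of_real (pochhammer (5/6) n)"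
      "pochhammer (1/2::complex) n = of_real (pochhammer (1/2) n)"
      using pochhammer_of_real[where 'a=complex, of "1/6" n, unfolded a] pochhammer_of_real[where 'a=complex, of "5/6" n, unfolded a]
        pochhammer_of_real[where 'a=complex, of "1/2" n, unfolded a] by simp_all
  qed
  show ?thesis by (simp add: HA_def cr_def e)
qed

lemma poch_half_nz: "pochhammer (1/2::'a::field_char_0) n \<noteq> 0"
proof
  assume "pochhammer (1/2::'a) n = 0"
  then obtain k where "(1/2::'a) = - of_nat k" by (auto simp: pochhammer_eq_0_iff)
  then have "(1::'a) = - 2 * of_nat k" by (simp add: field_simps)
  then have "(of_int 1::'a) = of_int (- 2 * int k)" by simp
  then have "1 = - 2 * int k" using of_int_eq_iff by blast
  then show False by presburger
qed

lemma cr_Suc: "cr (Suc n) = cr n * ((1/6 + n) * (5/6 + n) / ((1/2 + real n) * (real n + 1)))"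
  using poch_half_nz[of n, where 'a=real]
  by (simp add: cr_def pochhammer_rec' field_simps)

lemma cr_bounds: "0 \<le> cr n \<and> cr n \<le> 1"
proof (induction n)
  case 0 then show ?case by (simp add: cr_def)
next
  case (Suc n)
  have r: "0 \<le> (1/6 + real n) * (5/6 + n) / ((1/2 + real n) * (real n + 1))"
    by simp
  have r1: "(1/6 + real n) * (5/6 + n) / ((1/2 + real n) * (real n + 1)) \<le> 1"
  proof -
    have pos: "0 < (1/2 + real n) * (real n + 1)" by simp
    have "(1/6 + real n) * (5/6 + n) \<le> (1/2 + real n) * (real n + 1)"
      by (simp add: algebra_simps) (simp add: field_simps)
    then show ?thesis using divide_le_eq_1_pos[OF pos] by blast
  qed
  from Suc.IH have a: "0 \<le> cr n" "cr n \<le> 1" by auto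
  show ?case unfolding cr_Suc by (rule conjI[OF mult_nonneg_nonneg[OF a(1) r] mult_le_one[OF a(2) r r1]])
qed

lemma HA_radius: "fps_conv_radius HA \<ge> 1"
  unfolding fps_conv_radius_def
proof (rule conv_radius_geI_ex')
  fix r :: real assume r: "0 < r" "ereal r < 1"
  then have "r < 1" by simp
  show "summable (\<lambda>n. HA $ n * of_real r ^ n)"
  proof (rule summable_comparison_test')
    show "summable (\<lambda>n. r ^ n)" using r \<open>r<1\<close> by simp
    show "norm (HA $ n * of_real r ^ n) \<le> r ^ n" for n
      using cr_bounds[of n] r by (simp add: HA_nth_cr norm_mult norm_power mult_left_le_one_le)
  qed
qed

lemma HA_rec: "HA $ Suc n * ((1/2 + of_nat n) * (of_nat n + 1)) = HA $ n * ((1/6 + of_nat n) * (5/6 + of_nat n))"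
proof -
  have nz: "(1/2 + real n) * (real n + 1) \<noteq> 0" by (simp add: add_pos_pos)
  have "cr (Suc n) * ((1/2 + real n) * (real n + 1)) = cr n * ((1/6 + real n) * (5/6 + real n))"
    unfolding cr_Suc using nz by simp
  then have "complex_of_real (cr (Suc n) * ((1/2 + real n) * (real n + 1))) = of_real (cr n * ((1/6 + real n) * (5/6 + real n)))"
    by simp
  then show ?thesis by (simp add: HA_nth_cr)
qed

definition "HA1 = fps_deriv HA"
definition "HA2 = fps_deriv HA1"

lemma HA_ode_fps:
  "fps_X * (HA2 - fps_X * HA2 - fps_const 2 * HA1) + fps_const (1/2) * HA1 - fps_const (5/36) * HA = 0"
proof (rule fps_ext)
  fix n
  show "(fps_X * (HA2 - fps_X * HA2 - fps_const 2 * HA1) + fps_const (1/2) * HA1 - fps_const (5/36) * HA) $ n = 0 $ n"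
  proof (cases n)
    case 0
    have "HA $ 0 = 1" by (simp add: HA_def)
    with HA_rec[of 0] show ?thesis using 0 by (simp add: HA1_def field_simps)
  next
    case (Suc m)
    have r: "HA $ Suc (Suc m) * ((1/2 + (of_nat m + 1)) * ((of_nat m + 1) + 1)) = HA $ Suc m * ((1/6 + (of_nat m + 1)) * (5/6 + (of_nat m + 1)))"
      using HA_rec[of "Suc m"] by simp
    show ?thesis
    proof (cases m)
      case 0
      with r Suc show ?thesis by (simp add: HA1_def HA2_def field_simps)
    next
      case (Suc k)
      with r \<open>n = Suc m\<close> show ?thesis by (simp add: HA1_def HA2_def field_simps)
    qed
  qed
qed

lemma rad_mult_lt: "ereal (norm z) < fps_conv_radius f \<Longrightarrow> ereal (norm z) < fps_conv_radius g \<Longrightarrow> ereal (norm (z::complex)) < fps_conv_radius (f * g)"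
  using fps_conv_radius_mult[of f g] by (auto simp: min_def split: if_splits)
lemma rad_diff_lt: "ereal (norm z) < fps_conv_radius f \<Longrightarrow> ereal (norm z) < fps_conv_radius g \<Longrightarrow> ereal (norm (z::complex)) < fps_conv_radius (f - g)"
  using fps_conv_radius_diff[of f g] by (auto simp: min_def split: if_splits)
lemma rad_add_lt: "ereal (norm z) < fps_conv_radius f \<Longrightarrow> ereal (norm z) < fps_conv_radius g \<Longrightarrow> ereal (norm (z::complex)) < fps_conv_radius (f + g)"
  using fps_conv_radius_add[of f g] by (auto simp: min_def split: if_splits)

lemma HA_rads:
  assumes "norm z < 1"
  shows "ereal (norm z) < fps_conv_radius HA" "ereal (norm z) < fps_conv_radius HA1" "ereal (norm z) < fps_conv_radius HA2"
proof -
  have a: "ereal (norm z) < 1" using assms by simp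
  show h0: "ereal (norm z) < fps_conv_radius HA" using a HA_radius by (rule less_le_trans)
  show h1: "ereal (norm z) < fps_conv_radius HA1" using h0 fps_conv_radius_deriv[of HA] unfolding HA1_def by (rule less_le_trans)
  show "ereal (norm z) < fps_conv_radius HA2" using h1 fps_conv_radius_deriv[of HA1] unfolding HA2_def by (rule less_le_trans)
qed

lemma HA_ode:
  assumes "norm z < 1"
  shows "z * (eval_fps HA2 z - z * eval_fps HA2 z - 2 * eval_fps HA1 z) + 1/2 * eval_fps HA1 z - 5/36 * eval_fps HA z = 0"
proof -
  note R = HA_rads[OF assms]
  have X: "ereal (norm z) < fps_conv_radius fps_X" by simp
  have C: "ereal (norm z) < fps_conv_radius (fps_const c)" for c by simp
  have "eval_fps (fps_X * (HA2 - fps_X * HA2 - fps_const 2 * HA1) + fps_const (1/2) * HA1 - fps_const (5/36) * HA) z = 0"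
    using HA_ode_fps by simp
  moreover have "eval_fps (fps_X * (HA2 - fps_X * HA2 - fps_const 2 * HA1) + fps_const (1/2) * HA1 - fps_const (5/36) * HA) z
     = z * (eval_fps HA2 z - z * eval_fps HA2 z - 2 * eval_fps HA1 z) + 1/2 * eval_fps HA1 z - 5/36 * eval_fps HA z"
    using R X C
    by (simp add: eval_fps_mult eval_fps_diff eval_fps_add rad_mult_lt rad_diff_lt rad_add_lt)
  ultimately show ?thesis by simp
qed

lemma HA_derivs:
  assumes "norm z < 1"
  shows "(eval_fps HA has_field_derivative eval_fps HA1 z) (at z)"
    "(eval_fps HA1 has_field_derivative eval_fps HA2 z) (at z)"
  using HA_rads[OF assms] unfolding HA1_def HA2_def
  by (auto intro!: has_field_derivative_eval_fps)

definition "WW x = eval_fps HA ((sin x)\<^sup>2) * cos x"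
definition "WW1 x = 2 * sin x * (cos x)\<^sup>2 * eval_fps HA1 ((sin x)\<^sup>2) - sin x * eval_fps HA ((sin x)\<^sup>2)"

lemma WW_deriv:
  assumes "norm ((sin x)\<^sup>2) < (1::real)"
  shows "(WW has_field_derivative WW1 x) (at x)"
proof -
  have d0: "((\<lambda>x. (sin x)\<^sup>2) has_field_derivative (2 * sin x * cos x)) (at (x::complex))"
    by (rule derivative_eq_intros refl | simp)+
  have d1: "((\<lambda>x. eval_fps HA ((sin x)\<^sup>2)) has_field_derivative eval_fps HA1 ((sin x)\<^sup>2) * (2 * sin x * cos x)) (at x)"
    by (rule DERIV_chain2[OF HA_derivs(1)[OF assms] d0])
  have "((\<lambda>x. eval_fps HA ((sin x)\<^sup>2) * cos x) has_field_derivative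
      eval_fps HA1 ((sin x)\<^sup>2) * (2 * sin x * cos x) * cos x + eval_fps HA ((sin x)\<^sup>2) * (- sin x)) (at x)"
    by (rule DERIV_mult[OF d1 DERIV_cos, THEN DERIV_cong]) (simp add: algebra_simps)
  then show ?thesis unfolding WW_def[abs_def] WW1_def
    by (rule DERIV_cong) (simp add: algebra_simps power2_eq_square)
qed

lemma WW1_deriv:
  assumes "norm ((sin x)\<^sup>2) < (1::real)"
  shows "(WW1 has_field_derivative (-4/9 * WW x)) (at x)"
proof -
  have d0: "((\<lambda>x. (sin x)\<^sup>2) has_field_derivative (2 * sin x * cos x)) (at (x::complex))"
    by (rule derivative_eq_intros refl | simp)+
  have d1: "((\<lambda>x. eval_fps HA ((sin x)\<^sup>2)) has_field_derivative eval_fps HA1 ((sin x)\<^sup>2) * (2 * sin x * cos x)) (at x)"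
    by (rule DERIV_chain2[OF HA_derivs(1)[OF assms] d0])
  have d2: "((\<lambda>x. eval_fps HA1 ((sin x)\<^sup>2)) has_field_derivative eval_fps HA2 ((sin x)\<^sup>2) * (2 * sin x * cos x)) (at x)"
    by (rule DERIV_chain2[OF HA_derivs(2)[OF assms] d0])
  have dc2: "((\<lambda>x. (cos x)\<^sup>2) has_field_derivative (2 * cos x * (- sin x))) (at (x::complex))"
    by (rule derivative_eq_intros refl | simp)+
  define s where "s = sin x"
  define c where "c = cos x"
  define F where "F = eval_fps HA ((sin x)\<^sup>2)"
  define F1 where "F1 = eval_fps HA1 ((sin x)\<^sup>2)"
  define F2 where "F2 = eval_fps HA2 ((sin x)\<^sup>2)"
  have e1: "((\<lambda>x. 2 * sin x * (cos x)\<^sup>2 * eval_fps HA1 ((sin x)\<^sup>2)) has_field_derivative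
      (2 * cos x * (cos x)\<^sup>2 + 2 * sin x * (2 * cos x * (- sin x))) * eval_fps HA1 ((sin x)\<^sup>2)
       + 2 * sin x * (cos x)\<^sup>2 * (eval_fps HA2 ((sin x)\<^sup>2) * (2 * sin x * cos x))) (at x)"
    by (rule DERIV_mult[OF DERIV_mult[OF DERIV_cmult[OF DERIV_sin] dc2] d2, THEN DERIV_cong]) simp
  have e2: "((\<lambda>x. sin x * eval_fps HA ((sin x)\<^sup>2)) has_field_derivative
      cos x * eval_fps HA ((sin x)\<^sup>2) + sin x * (eval_fps HA1 ((sin x)\<^sup>2) * (2 * sin x * cos x))) (at x)"
    by (rule DERIV_mult[OF DERIV_sin d1, THEN DERIV_cong]) (simp add: algebra_simps)
  have ode: "s\<^sup>2 * (F2 - s\<^sup>2 * F2 - 2 * F1) + 1/2 * F1 - 5/36 * F = 0"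
    using HA_ode[of "(sin x)\<^sup>2"] assms unfolding s_def F_def F1_def F2_def by simp
  have py: "s\<^sup>2 + c\<^sup>2 = 1" unfolding s_def c_def by (rule sin_cos_squared_add)
  have key: "(2 * c * c\<^sup>2 + 2 * s * (2 * c * (- s))) * F1 + 2 * s * c\<^sup>2 * (F2 * (2 * s * c))
      - (c * F + s * (F1 * (2 * s * c))) + 4/9 * (F * c)
      = 4 * c * (s\<^sup>2 * (F2 - s\<^sup>2 * F2 - 2 * F1) + 1/2 * F1 - 5/36 * F) + (s\<^sup>2 + c\<^sup>2 - 1) * (2 * c * F1 + 4 * c * s\<^sup>2 * F2)"
    by (simp add: algebra_simps power2_eq_square power3_eq_cube)
  have "(2 * c * c\<^sup>2 + 2 * s * (2 * c * (- s))) * F1 + 2 * s * c\<^sup>2 * (F2 * (2 * s * c))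
      - (c * F + s * (F1 * (2 * s * c))) = -4/9 * (F * c)"
    using key ode py by (simp add: add_eq_0_iff2 eq_neg_iff_add_eq_0)
  then show ?thesis unfolding WW1_def[abs_def] WW_def
    using DERIV_diff[OF e1 e2] unfolding s_def c_def F_def F1_def F2_def
    by simp
qed

lemma WW_eq: "\<exists>\<rho>>0. \<forall>x\<in>ball 0 \<rho>. WW x = cos (2/3 * x)"
proof -
  have "open {x::complex. norm ((sin x)\<^sup>2) < 1}"
    by (rule open_Collect_less) (intro continuous_intros)+
  moreover have "0 \<in> {x::complex. norm ((sin x)\<^sup>2) < 1}" by simp
  ultimately obtain \<rho> where rp: "\<rho> > 0" and rs: "ball 0 \<rho> \<subseteq> {x::complex. norm ((sin x)\<^sup>2) < 1}"
    using open_contains_ball by blast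
  define p where "p x = WW x * cos (2/3 * x) - 3/2 * (WW1 x * sin (2/3 * x))" for x
  define q where "q x = WW x * sin (2/3 * x) + 3/2 * (WW1 x * cos (2/3 * x))" for x
  have dC: "((\<lambda>x. cos (2/3 * x)) has_field_derivative (- sin (2/3 * x) * (2/3))) (at (x::complex))" for x
    by (rule derivative_eq_intros refl | simp)+
  have dS: "((\<lambda>x. sin (2/3 * x)) has_field_derivative (cos (2/3 * x) * (2/3))) (at (x::complex))" for x
    by (rule derivative_eq_intros refl | simp)+
  have dp: "(p has_field_derivative 0) (at x within ball 0 \<rho>)" if "x \<in> ball 0 \<rho>" for x
  proof -
    have n: "norm ((sin x)\<^sup>2) < 1" using rs that by auto
    have "(p has_field_derivative (WW1 x * cos (2/3 * x) + (- sin (2/3 * x) * (2/3)) * WW x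
         - 3/2 * ((-4/9 * WW x) * sin (2/3 * x) + (cos (2/3 * x) * (2/3)) * WW1 x))) (at x)"
      unfolding p_def[abs_def]
      by (intro DERIV_diff DERIV_mult DERIV_cmult WW_deriv[OF n] WW1_deriv[OF n] dC dS)
    then have "(p has_field_derivative 0) (at x)"
      by (rule DERIV_cong) (simp add: algebra_simps)
    then show ?thesis by (rule has_field_derivative_at_within)
  qed
  have dq: "(q has_field_derivative 0) (at x within ball 0 \<rho>)" if "x \<in> ball 0 \<rho>" for x
  proof -
    have n: "norm ((sin x)\<^sup>2) < 1" using rs that by auto
    have "(q has_field_derivative (WW1 x * sin (2/3 * x) + (cos (2/3 * x) * (2/3)) * WW x
         + 3/2 * ((-4/9 * WW x) * cos (2/3 * x) + (- sin (2/3 * x) * (2/3)) * WW1 x))) (at x)"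
      unfolding q_def[abs_def]
      by (intro DERIV_add DERIV_mult DERIV_cmult WW_deriv[OF n] WW1_deriv[OF n] dC dS)
    then have "(q has_field_derivative 0) (at x)"
      by (rule DERIV_cong) (simp add: algebra_simps)
    then show ?thesis by (rule has_field_derivative_at_within)
  qed
  obtain cp where cp: "\<forall>x\<in>ball 0 \<rho>. p x = cp"
    using has_field_derivative_zero_constant[OF convex_ball dp] by blast
  obtain cq where cq: "\<forall>x\<in>ball 0 \<rho>. q x = cq"
    using has_field_derivative_zero_constant[OF convex_ball dq] by blast
  have W0: "WW 0 = 1" by (simp add: WW_def eval_fps_at_0 HA_def)
  have W10: "WW1 0 = 0" by (simp add: WW1_def)
  have p0: "p 0 = 1" by (simp add: p_def W0 W10)
  have q0: "q 0 = 0" by (simp add: q_def W0 W10)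
  have c0: "(0::complex) \<in> ball 0 \<rho>" using rp by simp
  have "WW x = cos (2/3 * x)" if "x \<in> ball 0 \<rho>" for x
  proof -
    have "p x = 1" "q x = 0" using cp cq p0 q0 c0 that by metis+
    moreover have "WW x = p x * cos (2/3 * x) + q x * sin (2/3 * x)"
    proof -
      have py: "(sin (2/3*x))\<^sup>2 + (cos (2/3*x))\<^sup>2 = 1" by (rule sin_cos_squared_add)
      have "p x * cos (2/3 * x) + q x * sin (2/3 * x) = WW x * ((sin (2/3*x))\<^sup>2 + (cos (2/3*x))\<^sup>2)"
        unfolding p_def q_def by algebra
      then show ?thesis by (simp only: py mult_1_right)
    qed
    ultimately show ?thesis by simp
  qed
  with rp show ?thesis by blast
qed

definition gg :: "real \<Rightarrow> complex \<Rightarrow> complex" where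
  "gg \<kappa> t = eval_fps HA ((complex_of_real \<kappa>)\<^sup>2 * t\<^sup>2) / csqrt (1 - t\<^sup>2)"

lemma U_as_gg: "U_of_phi \<kappa> \<phi> = contour_integral (linepath 0 (sin \<phi>)) (gg \<kappa>)"
  unfolding U_of_phi_def gg_def HA_eval ..

lemma gg_holo:
  assumes "0 < \<kappa>" "\<kappa> < 1"
  shows "gg \<kappa> holomorphic_on ball 0 1"
proof -
  have nb: "norm ((complex_of_real \<kappa>)\<^sup>2 * t\<^sup>2) < 1" if "t \<in> ball (0::complex) 1" for t
  proof -
    have "norm t < 1" using that by simp
    then have "norm t ^ 2 < 1" by (simp add: power_less_one_iff)
    moreover have "\<kappa>^2 < 1" using assms by (simp add: power_less_one_iff)
    moreover have "\<kappa>^2 * norm t ^ 2 \<le> norm t ^ 2"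
      by (rule mult_left_le_one_le) (use \<open>\<kappa>^2 < 1\<close> in auto)
    ultimately have "\<kappa>^2 * norm t ^ 2 < 1" by linarith
    then show ?thesis by (simp add: norm_mult norm_power abs_of_pos assms)
  qed
  have np: "1 - t\<^sup>2 \<notin> \<real>\<^sub>\<le>\<^sub>0" if "t \<in> ball (0::complex) 1" for t
  proof -
    have "norm t < 1" using that by simp
    then have "norm (t\<^sup>2) < 1" by (simp add: norm_power power_less_one_iff)
    then have "Re (t\<^sup>2) < 1" using complex_Re_le_cmod[of "t\<^sup>2"] by linarith
    then have "Re (1 - t\<^sup>2) > 0" by simp
    then show ?thesis by (auto simp: complex_nonpos_Reals_iff)
  qed
  have h1: "eval_fps HA holomorphic_on ball 0 1"
  proof (rule holomorphic_on_eval_fps, rule subsetI)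
    fix x :: complex assume "x \<in> ball 0 1"
    then show "x \<in> eball 0 (fps_conv_radius HA)" using HA_rads(1)[of x] by simp
  qed
  have h2: "(\<lambda>t. eval_fps HA ((complex_of_real \<kappa>)\<^sup>2 * t\<^sup>2)) holomorphic_on ball 0 1"
  proof -
    have "(\<lambda>t. (complex_of_real \<kappa>)\<^sup>2 * t\<^sup>2) holomorphic_on ball 0 1"
      by (intro holomorphic_intros)
    moreover have "(\<lambda>t. (complex_of_real \<kappa>)\<^sup>2 * t\<^sup>2) ` ball 0 1 \<subseteq> ball 0 1"
      using nb by auto
    ultimately show ?thesis
      using holomorphic_on_compose_gen[OF _ h1, of "\<lambda>t. (complex_of_real \<kappa>)\<^sup>2 * t\<^sup>2" "ball 0 1"]
      by (simp add: o_def)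
  qed
  have h3: "(\<lambda>t. csqrt (1 - t\<^sup>2)) holomorphic_on ball 0 1"
    by (intro holomorphic_intros np)
  have nz: "csqrt (1 - t\<^sup>2) \<noteq> 0" if "t \<in> ball (0::complex) 1" for t
    using np[OF that] by auto
  show ?thesis unfolding gg_def[abs_def]
    by (rule holomorphic_on_divide[OF h2 h3 nz])
qed

lemma G_deriv:
  assumes "0 < \<kappa>" "\<kappa> < 1" "w \<in> ball 0 1"
  shows "((\<lambda>w. contour_integral (linepath 0 w) (gg \<kappa>)) has_field_derivative gg \<kappa> w) (at w)"
proof (rule triangle_contour_integrals_starlike_primitive[where S="ball 0 1"])
  show "continuous_on (ball 0 1) (gg \<kappa>)"
    using gg_holo[OF assms(1,2)] by (rule holomorphic_on_imp_continuous_on)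
  show "(0::complex) \<in> ball 0 1" "open (ball (0::complex) 1)" by auto
  show "w \<in> ball 0 1" by fact
  show "closed_segment 0 y \<subseteq> ball 0 1" if "y \<in> ball (0::complex) 1" for y
    using that by (intro closed_segment_subset) (auto simp: convex_ball)
  show "contour_integral (linepath 0 b) (gg \<kappa>) + contour_integral (linepath b c) (gg \<kappa>) +
          contour_integral (linepath c 0) (gg \<kappa>) = 0" if "closed_segment b c \<subseteq> ball 0 1" for b c
  proof (rule has_chain_integral_chain_integral3, rule Cauchy_theorem_triangle)
    have "b \<in> ball 0 1" "c \<in> ball 0 1" using that by auto
    then have "convex hull {0, b, c} \<subseteq> ball 0 1"
      by (intro hull_minimal) auto
    then show "gg \<kappa> holomorphic_on convex hull {0, b, c}"
      using gg_holo[OF assms(1,2)] by (rule holomorphic_on_subset[rotated])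
  qed
qed

lemma U_deriv:
  assumes "0 < \<kappa>" "\<kappa> < 1" "norm (sin \<phi>) < 1" "Re (cos \<phi>) > 0"
  shows "(U_of_phi \<kappa> has_field_derivative eval_fps HA ((complex_of_real \<kappa>)\<^sup>2 * (sin \<phi>)\<^sup>2)) (at \<phi>)"
proof -
  have "((\<lambda>\<phi>. contour_integral (linepath 0 (sin \<phi>)) (gg \<kappa>)) has_field_derivative gg \<kappa> (sin \<phi>) * cos \<phi>) (at \<phi>)"
    by (rule DERIV_chain2[OF G_deriv[OF assms(1,2)] DERIV_sin]) (use assms in simp)
  moreover have "gg \<kappa> (sin \<phi>) * cos \<phi> = eval_fps HA ((complex_of_real \<kappa>)\<^sup>2 * (sin \<phi>)\<^sup>2)"
  proof -
    have "1 - (sin \<phi>)\<^sup>2 = (cos \<phi>)\<^sup>2" using sin_cos_squared_add[of \<phi>] by (simp add: algebra_simps)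
    then have "csqrt (1 - (sin \<phi>)\<^sup>2) = cos \<phi>" using csqrt_square[of "cos \<phi>"] assms(4) by simp
    moreover have "cos \<phi> \<noteq> 0" using assms(4) by auto
    ultimately show ?thesis by (simp add: gg_def)
  qed
  ultimately show ?thesis unfolding U_as_gg[abs_def] by simp
qed

lemma final_alg:
  fixes D c Fk pp qq k cf sf sP SS t LL dd :: complex
  assumes "D \<noteq> 0" "c \<noteq> 0" "Fk * pp = 1" "c * qq = k * cf * pp" "Fk * c = D"
    "sP = k * sf" "sf\<^sup>2 + cf\<^sup>2 = 1" "SS\<^sup>2 + D\<^sup>2 = 1" "D = 2 * t\<^sup>2 - 1" "c = 4 * t^3 - 3 * t"
    "sP\<^sup>2 + c\<^sup>2 = 1" "LL = 1 - k\<^sup>2" "dd = - SS * (2/3 * qq)"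
  shows "9 * dd\<^sup>2 = 2 * (1 - D\<^sup>2) * (4 * D^3 - 3 * D + 1 - 2 * LL) / D\<^sup>2"
proof -
  have pp: "pp = c / D" using assms(1-3,5) by (metis mult.commute nonzero_eq_divide_eq mult_1_left mult.assoc div_by_1 divide_divide_eq_left)
  have "c * qq = c * (k * cf / D)" using assms(4) pp by simp
  then have qq: "qq = k * cf / D" using assms(2) mult_left_cancel by blast
  have cc: "2 * c\<^sup>2 = 4 * D^3 - 3 * D + 1" unfolding assms(9,10) by algebra
  have "9 * dd\<^sup>2 * D\<^sup>2 = 4 * SS\<^sup>2 * (k\<^sup>2 * cf\<^sup>2)" using assms(1) unfolding assms(13) qq
    by (simp add: field_simps power2_eq_square)
  also have "k\<^sup>2 * cf\<^sup>2 = k\<^sup>2 - sP\<^sup>2" using assms(6,7) by algebra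
  also have "\<dots> = c\<^sup>2 - LL" using assms(11,12) by algebra
  also have "4 * SS\<^sup>2 * (c\<^sup>2 - LL) = 2 * (1 - D\<^sup>2) * (4 * D^3 - 3 * D + 1 - 2 * LL)"
    using cc assms(8) by algebra
  finally show ?thesis using assms(1) by (simp add: field_simps)
qed

lemma tendsto_nhds_holo:
  assumes "f holomorphic_on ball 0 r" "0 < r"
  shows "(f \<longlongrightarrow> f 0) (nhds (0::complex))"
proof -
  have "isCont f 0"
    using assms holomorphic_on_imp_continuous_on continuous_on_eq_continuous_at[OF open_ball, of 0 r f]
    by auto
  then show ?thesis unfolding isCont_def tendsto_at_iff_tendsto_nhds .
qed

theorem theorem6:
  fixes \<kappa> lam r :: real and \<phi> \<psi> :: "complex \<Rightarrow> complex"
  assumes "0 < \<kappa>" "\<kappa> < 1" "lam = sqrt (1 - \<kappa>\<^sup>2)"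
    and "0 < r"
    and "\<phi> holomorphic_on ball 0 r" "\<phi> 0 = 0"
    and "\<forall>u\<in>ball 0 r. U_of_phi \<kappa> (\<phi> u) = u"
    and "\<psi> holomorphic_on ball 0 r" "\<psi> 0 = 0"
    and "\<forall>u\<in>ball 0 r. sin (\<psi> u) = complex_of_real \<kappa> * sin (\<phi> u)"
  shows "\<forall>\<^sub>F u in nhds 0.
     (let d = (\<lambda>v. cos (2/3 * \<psi> v)) in
       9 * (deriv d u)\<^sup>2 =
       2 * (1 - (d u)\<^sup>2) * (4 * (d u)^3 - 3 * d u + 1 - 2 * (complex_of_real lam)\<^sup>2) / (d u)\<^sup>2)"
proof -
  obtain \<rho> where rp: "\<rho> > 0" and W\<rho>: "\<forall>x\<in>ball 0 \<rho>. WW x = cos (2/3 * x)"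
    using WW_eq by blast
  have t\<phi>: "(\<phi> \<longlongrightarrow> 0) (nhds 0)" using tendsto_nhds_holo[OF assms(5,4)] assms(6) by simp
  have t\<psi>: "(\<psi> \<longlongrightarrow> 0) (nhds 0)" using tendsto_nhds_holo[OF assms(8,4)] assms(9) by simp
  have e0: "eventually (\<lambda>u. u \<in> ball 0 r) (nhds (0::complex))"
    using assms(4) by (intro eventually_nhds_in_open) auto
  have "((\<lambda>u. norm (sin (\<phi> u))) \<longlongrightarrow> norm (sin (0::complex))) (nhds 0)"
    by (intro tendsto_intros t\<phi>)
  then have e1: "eventually (\<lambda>u. norm (sin (\<phi> u)) < 1) (nhds 0)"
    by (rule order_tendstoD) simp
  have "((\<lambda>u. Re (cos (\<phi> u))) \<longlongrightarrow> Re (cos (0::complex))) (nhds 0)"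
    by (intro tendsto_intros t\<phi>)
  then have e2: "eventually (\<lambda>u. Re (cos (\<phi> u)) > 0) (nhds 0)"
    by (rule order_tendstoD) simp
  have "((\<lambda>u. norm (\<psi> u)) \<longlongrightarrow> norm (0::complex)) (nhds 0)"
    by (intro tendsto_intros t\<psi>)
  then have e3: "eventually (\<lambda>u. norm (\<psi> u) < \<rho>) (nhds 0)"
    by (rule order_tendstoD) (simp add: rp)
  have "((\<lambda>u. norm (cos (\<psi> u))) \<longlongrightarrow> norm (cos (0::complex))) (nhds 0)"
    by (intro tendsto_intros t\<psi>)
  then have e4: "eventually (\<lambda>u. norm (cos (\<psi> u)) > 0) (nhds 0)"
    by (rule order_tendstoD) simp
  have "((\<lambda>u. norm (cos (2/3 * \<psi> u))) \<longlongrightarrow> norm (cos (2/3 * (0::complex)))) (nhds 0)"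
    by (intro tendsto_intros t\<psi>)
  then have e5: "eventually (\<lambda>u. norm (cos (2/3 * \<psi> u)) > 0) (nhds 0)"
    by (rule order_tendstoD) simp
  show ?thesis
  using e0 e1 e2 e3 e4 e5
  proof eventually_elim
    case (elim u)
    have ob: "open (ball (0::complex) r)" by simp
    have d\<phi>: "(\<phi> has_field_derivative deriv \<phi> u) (at u)"
      using assms(5) ob elim(1) by (rule holomorphic_derivI)
    have d\<psi>: "(\<psi> has_field_derivative deriv \<psi> u) (at u)"
      using assms(8) ob elim(1) by (rule holomorphic_derivI)
    define Fk where "Fk = eval_fps HA ((complex_of_real \<kappa>)\<^sup>2 * (sin (\<phi> u))\<^sup>2)"
    have dU: "(U_of_phi \<kappa> has_field_derivative Fk) (at (\<phi> u))"
      unfolding Fk_def using assms(1,2) elim(2,3) by (rule U_deriv)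
    have c1: "((\<lambda>v. U_of_phi \<kappa> (\<phi> v)) has_field_derivative Fk * deriv \<phi> u) (at u)"
      by (rule DERIV_chain2[OF dU d\<phi>])
    have c2: "((\<lambda>v. U_of_phi \<kappa> (\<phi> v)) has_field_derivative 1) (at u)"
      by (rule has_field_derivative_transform_within_open[OF DERIV_ident ob elim(1)])
         (use assms(7) in simp)
    have eq1: "Fk * deriv \<phi> u = 1" using DERIV_unique[OF c1 c2] .
    have s1: "((\<lambda>v. sin (\<psi> v)) has_field_derivative cos (\<psi> u) * deriv \<psi> u) (at u)"
      by (rule DERIV_chain2[OF DERIV_sin d\<psi>])
    have s2: "((\<lambda>v. complex_of_real \<kappa> * sin (\<phi> v)) has_field_derivative complex_of_real \<kappa> * (cos (\<phi> u) * deriv \<phi> u)) (at u)"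
      by (rule DERIV_cmult[OF DERIV_chain2[OF DERIV_sin d\<phi>]])
    have s3: "((\<lambda>v. sin (\<psi> v)) has_field_derivative complex_of_real \<kappa> * (cos (\<phi> u) * deriv \<phi> u)) (at u)"
      by (rule has_field_derivative_transform_within_open[OF s2 ob elim(1)])
         (use assms(10) in simp)
    have eq2: "cos (\<psi> u) * deriv \<psi> u = complex_of_real \<kappa> * cos (\<phi> u) * deriv \<phi> u"
      using DERIV_unique[OF s1 s3] by (simp add: mult.assoc)
    have dd: "deriv (\<lambda>v. cos (2/3 * \<psi> v)) u = - sin (2/3 * \<psi> u) * (2/3 * deriv \<psi> u)"
      by (rule DERIV_imp_deriv, rule DERIV_chain2[OF DERIV_cos DERIV_cmult[OF d\<psi>]])
    have sp: "sin (\<psi> u) = complex_of_real \<kappa> * sin (\<phi> u)" using assms(10) elim(1) by simp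
    have eq3: "Fk * cos (\<psi> u) = cos (2/3 * \<psi> u)"
    proof -
      have "\<psi> u \<in> ball 0 \<rho>" using elim(4) by simp
      then have "WW (\<psi> u) = cos (2/3 * \<psi> u)" using W\<rho> by blast
      moreover have "(sin (\<psi> u))\<^sup>2 = (complex_of_real \<kappa>)\<^sup>2 * (sin (\<phi> u))\<^sup>2"
        unfolding sp by (simp add: power_mult_distrib)
      ultimately show ?thesis unfolding WW_def Fk_def by simp
    qed
    define t where "t = cos (\<psi> u / 3)"
    have tr1: "cos (2/3 * \<psi> u) = 2 * t\<^sup>2 - 1"
      using cos_double_cos[of "\<psi> u / 3"] unfolding t_def by (simp add: field_simps)
    have tr2: "cos (\<psi> u) = 4 * t^3 - 3 * t"
      using cos_treble_cos[of "\<psi> u / 3"] unfolding t_def by (simp add: field_simps)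
    have L: "(complex_of_real lam)\<^sup>2 = 1 - (complex_of_real \<kappa>)\<^sup>2"
    proof -
      have "lam\<^sup>2 = 1 - \<kappa>\<^sup>2" using assms(1,2,3) by (simp add: power_le_one_iff abs_less_iff)
      then have "complex_of_real (lam\<^sup>2) = complex_of_real (1 - \<kappa>\<^sup>2)" by simp
      then show ?thesis by simp
    qed
    have main: "9 * (deriv (\<lambda>v. cos (2/3 * \<psi> v)) u)\<^sup>2 =
       2 * (1 - (cos (2/3 * \<psi> u))\<^sup>2) * (4 * (cos (2/3 * \<psi> u))^3 - 3 * cos (2/3 * \<psi> u) + 1 - 2 * (complex_of_real lam)\<^sup>2) / (cos (2/3 * \<psi> u))\<^sup>2"
    proof (rule final_alg[where Fk=Fk and c="cos (\<psi> u)" and pp="deriv \<phi> u" and qq="deriv \<psi> u"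
          and k="complex_of_real \<kappa>" and cf="cos (\<phi> u)" and sf="sin (\<phi> u)" and sP="sin (\<psi> u)"
          and SS="sin (2/3 * \<psi> u)" and t=t])
      show "cos (2/3 * \<psi> u) \<noteq> 0" using elim(6) by auto
      show "cos (\<psi> u) \<noteq> 0" using elim(5) by auto
      show "(sin (2/3 * \<psi> u))\<^sup>2 + (cos (2/3 * \<psi> u))\<^sup>2 = 1" by (rule sin_cos_squared_add)
      show "(sin (\<psi> u))\<^sup>2 + (cos (\<psi> u))\<^sup>2 = 1" by (rule sin_cos_squared_add)
    qed (use eq1 eq2 eq3 sp tr1 tr2 L dd in \<open>simp_all add: sin_cos_squared_add\<close>)
    then show ?case unfolding Let_def .
  qed
qed

end
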